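(* Let $M$ be an $n$-dimensional manifold (or open subset of $\mathbb{R}^n$) with coordinates $x^1,\dots,x^n$, and let $\eta^{ij}=\eta_{ij}$ be a constant diagonal matrix with diagonal entries $\eta^{ii}=\eta_{ii}\in\{1,-1\}$. Let $\mathcal{K}$ be the Clifford algebra of differential forms (over the ring of scalar functions on $M$) generated by $dx^1,\dots,dx^n$ subject to $dx^i dx^j+dx^j dx^i=2\eta^{ij}$, and let $\mathcal{C}$ be the real Clifford algebra generated by vectors $\mathbf{a}_1,\dots,\mathbf{a}_n$ subject to $\mathbf{a}_i\mathbf{a}_j+\mathbf{a}_j\mathbf{a}_i=2\eta_{ij}$. On the tensor product $\mathcal{K}\otimes\mathcal{C}$ (with scalar-function coefficients), define the product $(\vee,\vee)$ by $(f\,u\,A)(\vee,\vee)(g\,v\,B)=fg\,(uv)(AB)$ for scalar functions $f,g$, $u,v\in\mathcal{K}$, $A,B\in\mathcal{C}$, extended bilinearly, where $uv$ and $AB$ are the respective Clifford products. For an increasing multi-index $I=(i_1<\dots<i_p)$ (including the empty one) write $dx^I=dx^{i_1}\cdots dx^{i_p}$ and $\mathbf{a}_I=\mathbf{a}_{i_1}\cdots\mathbf{a}_{i_p}$. Call an element mirror symmetric if it is of the form $\sum_I f_I\, dx^I\mathbf{a}_I$ with scalar functions $f_I$. Then the set of mirror symmetric elements is closed under $(\vee,\vee)$ and, with this product, forms a commutative algebra: for all mirror symmetric $U,V$, $U(\vee,\vee)V=V(\vee,\vee)U$ and this product is mirror symmetric.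
   Context: Elements such as $dx^1\mathbf{a}_1$ or $dx^1dx^2\mathbf{a}_1\mathbf{a}_2$ are mirror symmetric (the index set of the differential-form factor equals that of the tangent Clifford factor), while e.g. $dx^1\mathbf{a}_2$ is not. The product $(\vee,\vee)$ uses the Clifford product in both tensor factors simultaneously. *)

theory Defs
  imports Complex_Main
begin

text \<open>Basis of the Clifford algebra generated by e_1,...,e_n with e_i e_j + e_j e_i = 2 eta_ij,
  eta diagonal: increasing multi-indices I, i.e. subsets of {1..n}; e_I = e_{i_1} ... e_{i_p}.
  The product of basis blades is e_I e_J = blade_sign eta I J * e_(I sym-diff J):
  reorder (one sign change for every pair i in I, j in J with j < i), then contract e_i e_i = eta_i.\<close>

definition blade_sign :: "(nat \<Rightarrow> real) \<Rightarrow> nat set \<Rightarrow> nat set \<Rightarrow> real" where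
  "blade_sign eta I J =
     (-1) ^ card {(i, j). i \<in> I \<and> j \<in> J \<and> j < i} * (\<Prod>i\<in>I \<inter> J. eta i)"

definition symdiff :: "'a set \<Rightarrow> 'a set \<Rightarrow> 'a set" where
  "symdiff A B = (A - B) \<union> (B - A)"

text \<open>Elements of K (x) C with scalar-function coefficients: U (I, J) is the coefficient
  function (on the points of M, of type 'm) of dx^I a_J. Only I, J \<subseteq> {1..n} are allowed.\<close>

type_synonym 'm KC = "nat set \<times> nat set \<Rightarrow> 'm \<Rightarrow> real"

definition KC_carrier :: "nat \<Rightarrow> 'm KC set" where
  "KC_carrier n = {U. \<forall>I J. \<not> (I \<subseteq> {1..n} \<and> J \<subseteq> {1..n}) \<longrightarrow> U (I, J) = (\<lambda>_. 0)}"

definition vv :: "nat \<Rightarrow> (nat \<Rightarrow> real) \<Rightarrow> 'm KC \<Rightarrow> 'm KC \<Rightarrow> 'm KC" where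
  "vv n eta U V = (\<lambda>(K, L) x.
     \<Sum>I\<in>Pow {1..n}. \<Sum>J\<in>Pow {1..n}. \<Sum>I'\<in>Pow {1..n}. \<Sum>J'\<in>Pow {1..n}.
       (if symdiff I I' = K \<and> symdiff J J' = L
        then blade_sign eta I I' * blade_sign eta J J' * U (I, J) x * V (I', J') x
        else 0))"

definition mirror_symmetric :: "nat \<Rightarrow> 'm KC \<Rightarrow> bool" where
  "mirror_symmetric n U \<longleftrightarrow> U \<in> KC_carrier n \<and> (\<forall>I J. I \<noteq> J \<longrightarrow> U (I, J) = (\<lambda>_. 0))"

end

theory Submission
  imports Defs
begin

lemma bs_sq:
  assumes "\<forall>i\<in>{1..n}. eta i = 1 \<or> eta i = -1" "I \<subseteq> {1..n}"
  shows "blade_sign eta I J * blade_sign eta I J = 1"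
proof -
  have "(\<Prod>i\<in>I \<inter> J. eta i) * (\<Prod>i\<in>I \<inter> J. eta i) = (\<Prod>i\<in>I \<inter> J. eta i * eta i)"
    by (simp add: prod.distrib)
  also have "\<dots> = 1"
    using assms by (intro prod.neutral) fastforce
  finally have p: "(\<Prod>i\<in>I \<inter> J. eta i) * (\<Prod>i\<in>I \<inter> J. eta i) = 1" .
  have "((-1::real) ^ card {(i, j). i \<in> I \<and> j \<in> J \<and> j < i}) *
        ((-1) ^ card {(i, j). i \<in> I \<and> j \<in> J \<and> j < i}) = 1"
    by (simp add: power_add[symmetric] flip: mult_2)
  then show ?thesis using p unfolding blade_sign_def
    by (metis (no_types, lifting) mult.commute mult.left_commute mult_1)
qed

lemma vv_mirror:
  assumes eta: "\<forall>i\<in>{1..n}. eta i = 1 \<or> eta i = -1"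
    and U: "mirror_symmetric n U" and V: "mirror_symmetric n V"
  shows "vv n eta U V (K, L) x =
    (\<Sum>I\<in>Pow {1..n}. \<Sum>I'\<in>Pow {1..n}.
       (if symdiff I I' = K \<and> K = L then U (I, I) x * V (I', I') x else 0))"
proof -
  have u: "\<And>I J. U (I, J) x = (if J = I then U (I, I) x else 0)"
    using U unfolding mirror_symmetric_def by (metis)
  have v: "\<And>I J. V (I, J) x = (if J = I then V (I, I) x else 0)"
    using V unfolding mirror_symmetric_def by (metis)
  have "vv n eta U V (K, L) x =
    (\<Sum>I\<in>Pow {1..n}. \<Sum>J\<in>Pow {1..n}. \<Sum>I'\<in>Pow {1..n}. \<Sum>J'\<in>Pow {1..n}.
       (if J = I then (if J' = I' then
         (if symdiff I I' = K \<and> symdiff J J' = L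
        then blade_sign eta I I' * blade_sign eta J J' * U (I, J) x * V (I', J') x
        else 0) else 0) else 0))"
    unfolding vv_def prod.case by (intro sum.cong refl) (subst u, subst v, auto)
  also have "\<dots> = (\<Sum>I\<in>Pow {1..n}. \<Sum>I'\<in>Pow {1..n}.
       (if symdiff I I' = K \<and> symdiff I I' = L
        then blade_sign eta I I' * blade_sign eta I I' * U (I, I) x * V (I', I') x
        else 0))"
  proof (rule sum.cong[OF refl])
    fix I assume I: "I \<in> Pow {1..n}"
    let ?g = "\<lambda>J. \<Sum>I'\<in>Pow {1..n}. \<Sum>J'\<in>Pow {1..n}.
         (if J' = I' then
         (if symdiff I I' = K \<and> symdiff J J' = L
        then blade_sign eta I I' * blade_sign eta J J' * U (I, J) x * V (I', J') x
        else 0) else 0)"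
    have "(\<Sum>J\<in>Pow {1..n}. \<Sum>I'\<in>Pow {1..n}. \<Sum>J'\<in>Pow {1..n}.
       (if J = I then (if J' = I' then
         (if symdiff I I' = K \<and> symdiff J J' = L
        then blade_sign eta I I' * blade_sign eta J J' * U (I, J) x * V (I', J') x
        else 0) else 0) else 0)) = (\<Sum>J\<in>Pow {1..n}. if J = I then ?g J else 0)"
      by (intro sum.cong refl) auto
    also have "\<dots> = ?g I" using I by (simp add: sum.delta')
    also have "\<dots> = (\<Sum>I'\<in>Pow {1..n}.
       (if symdiff I I' = K \<and> symdiff I I' = L
        then blade_sign eta I I' * blade_sign eta I I' * U (I, I) x * V (I', I') x
        else 0))"
    proof (rule sum.cong[OF refl])
      fix I' assume I': "I' \<in> Pow {1..n}"
      show "(\<Sum>J'\<in>Pow {1..n}.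
         (if J' = I' then
         (if symdiff I I' = K \<and> symdiff I J' = L
        then blade_sign eta I I' * blade_sign eta I J' * U (I, I) x * V (I', J') x
        else 0) else 0)) = (if symdiff I I' = K \<and> symdiff I I' = L
        then blade_sign eta I I' * blade_sign eta I I' * U (I, I) x * V (I', I') x
        else 0)"
        using I' by (simp add: sum.delta')
    qed
    finally show "(\<Sum>J\<in>Pow {1..n}. \<Sum>I'\<in>Pow {1..n}. \<Sum>J'\<in>Pow {1..n}.
       (if J = I then (if J' = I' then
         (if symdiff I I' = K \<and> symdiff J J' = L
        then blade_sign eta I I' * blade_sign eta J J' * U (I, J) x * V (I', J') x
        else 0) else 0) else 0)) = (\<Sum>I'\<in>Pow {1..n}.
       (if symdiff I I' = K \<and> symdiff I I' = L
        then blade_sign eta I I' * blade_sign eta I I' * U (I, I) x * V (I', I') x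
        else 0))" .
  qed
  also have "\<dots> = (\<Sum>I\<in>Pow {1..n}. \<Sum>I'\<in>Pow {1..n}.
       (if symdiff I I' = K \<and> K = L then U (I, I) x * V (I', I') x else 0))"
    by (intro sum.cong refl) (auto simp: bs_sq[OF eta])
  finally show ?thesis .
qed

lemma symdiff_comm: "symdiff A B = symdiff B A"
  unfolding symdiff_def by blast

theorem mainTheorem1:
  fixes n :: nat and eta :: "nat \<Rightarrow> real" and U V :: "'m KC"
  assumes "\<forall>i\<in>{1..n}. eta i = 1 \<or> eta i = -1"
    and "mirror_symmetric n U" and "mirror_symmetric n V"
  shows "vv n eta U V = vv n eta V U \<and> mirror_symmetric n (vv n eta U V)"
proof
  note m1 = vv_mirror[OF assms(1) assms(2) assms(3)]
  note m2 = vv_mirror[OF assms(1) assms(3) assms(2)]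
  show "vv n eta U V = vv n eta V U"
  proof (intro ext, clarify)
    fix K L x
    show "vv n eta U V (K, L) x = vv n eta V U (K, L) x"
      unfolding m1 m2
      by (subst sum.swap) (intro sum.cong refl, auto simp: symdiff_comm)
  qed
  show "mirror_symmetric n (vv n eta U V)"
    unfolding mirror_symmetric_def KC_carrier_def
  proof (intro conjI CollectI allI impI ext)
    fix I J :: "nat set" and x assume "\<not> (I \<subseteq> {1..n} \<and> J \<subseteq> {1..n})"
    moreover have "\<And>A B. A \<subseteq> {1..n} \<Longrightarrow> B \<subseteq> {1..n} \<Longrightarrow> symdiff A B \<subseteq> {1..n}"
      unfolding symdiff_def by blast
    ultimately show "vv n eta U V (I, J) x = 0"
      unfolding m1 by (intro sum.neutral ballI) auto
  next
    fix I J :: "nat set" and x assume "I \<noteq> J"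
    then show "vv n eta U V (I, J) x = 0"
      unfolding m1 by simp
  qed
qed

end
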